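(* $(U_0,\alpha_N\colon N\otimes U_0\to U_0)$ is a corecursive algebra for the functor $N\otimes-$ on $\mathsf{SquaSet}$.
   Context: Let $M_0=\{(r,s)\in[0,1]^2: r\in\{0,1\}\text{ or } s\in\{0,1\}\}$. A square set is a pair $(X,S_X)$ with $X$ a set and $S_X\colon M_0\to X$ injective; $\mathsf{SquaSet}$ has square sets as objects and maps $f$ with $f\circ S_X=S_Y$ as morphisms. Let $N=\{0,1,2\}^2$, also viewed as points of $\mathbb{R}^2$. For a square set $X$, $N\otimes X=(N\times X)/\!\sim$, where $\sim$ is the equivalence relation generated by $(m,S_X(p))\sim(n,S_X(q))$ whenever $m,n\in N$ differ by exactly $1$ in exactly one coordinate and $(m+p)/3=(n+q)/3$; $n\otimes x$ is the class of $(n,x)$; $S_{N\otimes X}(p)=n\otimes S_X(3p-n)$ for any $n\in N$ with $p\in(n+[0,1]^2)/3$; $(N\otimes f)(n\otimes x)=n\otimes f(x)$. $U_0=[0,1]^2$ with $S_{U_0}$ the inclusion, and $\alpha_N(n\otimes z)=\frac13(n+z)$. An algebra $(A,a\colon FA\to A)$ is corecursive if for every coalgebra $e\colon X\to FX$ there is a unique morphism $e^\dagger\colon X\to A$ with $e^\dagger=a\circ Fe^\dagger\circ e$. *)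

theory Defs
  imports "HOL-Analysis.Analysis"
begin

definition M0 :: "(real \<times> real) set" where
  "M0 = {(r, s). r \<in> {0..1} \<and> s \<in> {0..1} \<and> (r \<in> {0, 1} \<or> s \<in> {0, 1})}"

definition is_square_set :: "'x set \<Rightarrow> (real \<times> real \<Rightarrow> 'x) \<Rightarrow> bool" where
  "is_square_set X S \<longleftrightarrow> S \<in> M0 \<rightarrow> X \<and> inj_on S M0"

definition sq_mor :: "'x set \<Rightarrow> (real \<times> real \<Rightarrow> 'x) \<Rightarrow> 'y set \<Rightarrow> (real \<times> real \<Rightarrow> 'y)
    \<Rightarrow> ('x \<Rightarrow> 'y) \<Rightarrow> bool" where
  "sq_mor X S Y T f \<longleftrightarrow> f \<in> X \<rightarrow> Y \<and> (\<forall>p\<in>M0. f (S p) = T p)"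

definition Nidx :: "(int \<times> int) set" where
  "Nidx = {0, 1, 2} \<times> {0, 1, 2}"

definition ptN :: "int \<times> int \<Rightarrow> real \<times> real" where
  "ptN n = (of_int (fst n), of_int (snd n))"

definition adjN :: "int \<times> int \<Rightarrow> int \<times> int \<Rightarrow> bool" where
  "adjN m n \<longleftrightarrow> m \<in> Nidx \<and> n \<in> Nidx \<and>
     ((\<bar>fst m - fst n\<bar> = 1 \<and> snd m = snd n) \<or> (fst m = fst n \<and> \<bar>snd m - snd n\<bar> = 1))"

definition tens_gen :: "'x set \<Rightarrow> (real \<times> real \<Rightarrow> 'x) \<Rightarrow> (((int \<times> int) \<times> 'x) \<times> ((int \<times> int) \<times> 'x)) set" where
  "tens_gen X S = {((m, S p), (n, S q)) | m n p q. adjN m n \<and> p \<in> M0 \<and> q \<in> M0 \<and>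
      (1/3) *\<^sub>R (ptN m + p) = (1/3) *\<^sub>R (ptN n + q)} \<inter> ((Nidx \<times> X) \<times> (Nidx \<times> X))"

definition tens_rel :: "'x set \<Rightarrow> (real \<times> real \<Rightarrow> 'x) \<Rightarrow> (((int \<times> int) \<times> 'x) \<times> ((int \<times> int) \<times> 'x)) set" where
  "tens_rel X S = (tens_gen X S \<union> (tens_gen X S)\<inverse> \<union> Id_on (Nidx \<times> X))\<^sup>*"

definition tens_set :: "'x set \<Rightarrow> (real \<times> real \<Rightarrow> 'x) \<Rightarrow> ((int \<times> int) \<times> 'x) set set" where
  "tens_set X S = (Nidx \<times> X) // tens_rel X S"

definition tens_el :: "'x set \<Rightarrow> (real \<times> real \<Rightarrow> 'x) \<Rightarrow> int \<times> int \<Rightarrow> 'x \<Rightarrow> ((int \<times> int) \<times> 'x) set" where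
  "tens_el X S n x = tens_rel X S `` {(n, x)}"

definition sub_sq :: "int \<times> int \<Rightarrow> (real \<times> real) set" where
  "sub_sq n = {(1/3) *\<^sub>R (ptN n + z) | z. z \<in> {0..1} \<times> {0..1}}"

text \<open>S_{N \<otimes> X}(p) = n \<otimes> S_X(3p - n) for any n with p in (n + [0,1]^2)/3.\<close>
definition tens_S :: "'x set \<Rightarrow> (real \<times> real \<Rightarrow> 'x) \<Rightarrow> real \<times> real \<Rightarrow> ((int \<times> int) \<times> 'x) set" where
  "tens_S X S p = (let n = (SOME n. n \<in> Nidx \<and> p \<in> sub_sq n)
                   in tens_el X S n (S (3 *\<^sub>R p - ptN n)))"

text \<open>(N \<otimes> f)(n \<otimes> x) = n \<otimes> f(x), computed via a representative of the class.\<close>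
definition tens_map :: "'x set \<Rightarrow> (real \<times> real \<Rightarrow> 'x) \<Rightarrow> 'y set \<Rightarrow> (real \<times> real \<Rightarrow> 'y)
    \<Rightarrow> ('x \<Rightarrow> 'y) \<Rightarrow> ((int \<times> int) \<times> 'x) set \<Rightarrow> ((int \<times> int) \<times> 'y) set" where
  "tens_map X S Y T f c = (let nx = (SOME nx. nx \<in> c) in tens_el Y T (fst nx) (f (snd nx)))"

definition U0 :: "(real \<times> real) set" where
  "U0 = {0..1} \<times> {0..1}"

definition S_U0 :: "real \<times> real \<Rightarrow> real \<times> real" where
  "S_U0 p = p"

text \<open>alpha_N(n \<otimes> z) = (n + z)/3, computed via a representative.\<close>
definition alphaN :: "((int \<times> int) \<times> (real \<times> real)) set \<Rightarrow> real \<times> real" where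
  "alphaN c = (let nz = (SOME nz. nz \<in> c) in (1/3) *\<^sub>R (ptN (fst nz) + snd nz))"

end

theory Submission
  imports Defs
begin

lemma rel_U0_inv:
  assumes "(a,b) \<in> tens_rel U0 S_U0"
  shows "(1/3) *\<^sub>R (ptN (fst a) + snd a) = (1/3) *\<^sub>R (ptN (fst b) + snd b)"
  using assms unfolding tens_rel_def
proof (induction rule: rtrancl_induct)
  case base then show ?case by simp
next
  case (step b c)
  then show ?case unfolding tens_gen_def S_U0_def by auto
qed

lemma alphaN_el: "alphaN (tens_el U0 S_U0 n z) = (1/3) *\<^sub>R (ptN n + z)"
proof -
  let ?c = "tens_el U0 S_U0 n z"
  have "(n,z) \<in> ?c" unfolding tens_el_def tens_rel_def by auto
  hence "(SOME nz. nz \<in> ?c) \<in> ?c" by (rule someI)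
  hence "((n,z), SOME nz. nz \<in> ?c) \<in> tens_rel U0 S_U0" unfolding tens_el_def by auto
  from rel_U0_inv[OF this] show ?thesis unfolding alphaN_def Let_def by simp
qed

lemma rel_closed: "(a,b) \<in> tens_rel X S \<Longrightarrow> a \<in> Nidx \<times> X \<Longrightarrow> b \<in> Nidx \<times> X"
  unfolding tens_rel_def by (induction rule: rtrancl_induct) (auto simp: tens_gen_def)

lemma rel_bd:
  assumes inj: "inj_on S M0" and "(a,b) \<in> tens_rel X S"
   and "\<exists>q\<in>M0. snd a = S q \<and> (1/3) *\<^sub>R (ptN (fst a) + q) = P"
  shows "\<exists>q\<in>M0. snd b = S q \<and> (1/3) *\<^sub>R (ptN (fst b) + q) = P"
  using assms(2,3) unfolding tens_rel_def
proof (induction rule: rtrancl_induct)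
  case base thus ?case by simp
next
  case (step b c)
  from step.IH[OF step.prems] obtain q where q: "q\<in>M0" "snd b = S q"
     "(1/3) *\<^sub>R (ptN (fst b) + q) = P" by blast
  from step.hyps(2) consider "(b,c) \<in> tens_gen X S" | "(c,b) \<in> tens_gen X S" | "b = c" by auto
  then show ?case
  proof cases
    case 1
    then obtain m n p q' where b: "b = (m, S p)" "c = (n, S q')" "p\<in>M0" "q'\<in>M0"
      "(1/3) *\<^sub>R (ptN m + p) = (1/3) *\<^sub>R (ptN n + q')" unfolding tens_gen_def by blast
    have "p = q" using inj_onD[OF inj, of p q] b q by simp
    thus ?thesis using b q by auto
  next
    case 2
    then obtain m n p q' where b: "c = (m, S p)" "b = (n, S q')" "p\<in>M0" "q'\<in>M0"
      "(1/3) *\<^sub>R (ptN m + p) = (1/3) *\<^sub>R (ptN n + q')" unfolding tens_gen_def by blast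
    have "q' = q" using inj_onD[OF inj, of q' q] b q by simp
    thus ?thesis using b q by auto
  next
    case 3 thus ?thesis using q by auto
  qed
qed

lemma sub_sq_ex:
  assumes "p \<in> M0" shows "\<exists>n. n \<in> Nidx \<and> p \<in> sub_sq n"
proof -
  obtain a b where p: "p = (a,b)" by (cases p)
  have ab: "0 \<le> a" "a \<le> 1" "0 \<le> b" "b \<le> 1" using assms p unfolding M0_def by auto
  define k where "k = (\<lambda>t::real. if 3*t \<le> 1 then 0 else if 3*t \<le> 2 then 1 else (2::int))"
  have kN: "k t \<in> {0,1,2}" for t unfolding k_def by auto
  have kb: "0 \<le> 3*t - of_int (k t)" "3*t - of_int (k t) \<le> 1" if "0 \<le> t" "t \<le> 1" for t
    using that unfolding k_def by auto
  let ?n = "(k a, k b)"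
  let ?z = "(3*a - of_int (k a), 3*b - of_int (k b))"
  have "p = (1/3) *\<^sub>R (ptN ?n + ?z)" unfolding p ptN_def by simp
  moreover have "?z \<in> {0..1} \<times> {0..1}" using kb ab by auto
  ultimately have "p \<in> sub_sq ?n" unfolding sub_sq_def by blast
  moreover have "?n \<in> Nidx" using kN unfolding Nidx_def by auto
  ultimately show ?thesis by blast
qed

lemma sub_sq_M0:
  assumes "p \<in> M0" "n \<in> Nidx" "p \<in> sub_sq n"
  shows "3 *\<^sub>R p - ptN n \<in> M0"
proof -
  obtain z where z: "z \<in> {0..1} \<times> {0..1}" "p = (1/3) *\<^sub>R (ptN n + z)"
    using assms(3) unfolding sub_sq_def by blast
  have e: "3 *\<^sub>R p - ptN n = z" using z(2) by simp
  obtain a b where zab: "z = (a,b)" by (cases z)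
  obtain i j where nij: "n = (i,j)" by (cases n)
  have ij: "i \<in> {0,1,2}" "j \<in> {0,1,2}" using assms(2) nij unfolding Nidx_def by auto
  have pz: "p = ((of_int i + a)/3, (of_int j + b)/3)" using z(2) zab nij unfolding ptN_def by simp
  have "(of_int i + a)/3 \<in> {0,1} \<or> (of_int j + b)/3 \<in> {0,1}" using assms(1) pz unfolding M0_def by auto
  hence "a \<in> {0,1} \<or> b \<in> {0,1}" using ij z(1) zab by auto
  thus ?thesis using e z(1) zab unfolding M0_def by auto
qed

lemma zero_lemma:
  fixes g :: "'x \<Rightarrow> real"
  assumes cl: "\<forall>x\<in>Z. nxt x \<in> Z" and bd: "\<forall>x\<in>Z. \<bar>g x\<bar> \<le> B"
    and eq: "\<forall>x\<in>Z. g x = (1/3) * g (nxt x)"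
  shows "\<forall>x\<in>Z. g x = 0"
proof -
  have k: "\<forall>x\<in>Z. \<bar>g x\<bar> \<le> B * (1/3)^k" for k
  proof (induction k)
    case 0 then show ?case using bd by simp
  next
    case (Suc k)
    show ?case
    proof
      fix x assume x: "x \<in> Z"
      have "g x = (1/3) * g (nxt x)" using eq x by blast
      hence "\<bar>g x\<bar> = \<bar>1/3\<bar> * \<bar>g (nxt x)\<bar>" by (simp only: abs_mult)
      hence "\<bar>g x\<bar> = (1/3) * \<bar>g (nxt x)\<bar>" by simp
      also have "\<dots> \<le> (1/3) * (B * (1/3)^k)" using Suc cl x by auto
      finally show "\<bar>g x\<bar> \<le> B * (1/3)^Suc k" by simp
    qed
  qed
  show ?thesis
  proof
    fix x assume x: "x \<in> Z"
    have lim: "(\<lambda>k. B * (1/3::real)^k) \<longlonglongrightarrow> 0"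
      by (intro tendsto_mult_right_zero LIMSEQ_power_zero) simp
    have "\<bar>g x\<bar> \<le> 0"
      by (rule LIMSEQ_le_const[OF lim]) (use k x in auto)
    thus "g x = 0" by simp
  qed
qed

lemma series_facts:
  fixes a :: "nat \<Rightarrow> real"
  assumes "\<And>k. 0 \<le> a k" "\<And>k. a k \<le> 2"
  shows "summable (\<lambda>k. (1/3)^Suc k * a k)"
    and "0 \<le> (\<Sum>k. (1/3)^Suc k * a k)"
    and "(\<Sum>k. (1/3)^Suc k * a k) \<le> 1"
    and "(\<Sum>k. (1/3)^Suc k * a k) = (1/3) * (a 0 + (\<Sum>k. (1/3)^Suc k * a (Suc k)))"
proof -
  have g: "(\<lambda>k. 2 * (1/3::real)^Suc k) sums 1"
  proof -
    have "(\<lambda>k. (1/3::real)^k) sums (1 / (1 - 1/3))" by (rule geometric_sums) simp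
    from sums_mult[OF this, of "2/3"] show ?thesis by (simp add: mult.assoc)
  qed
  show s: "summable (\<lambda>k. (1/3)^Suc k * a k)"
    by (rule summable_comparison_test'[OF sums_summable[OF g], of 0])
       (use assms in \<open>auto intro: mult_left_mono\<close>)
  show "0 \<le> (\<Sum>k. (1/3)^Suc k * a k)" by (rule suminf_nonneg[OF s]) (use assms in simp)
  have "(\<Sum>k. (1/3)^Suc k * a k) \<le> (\<Sum>k. 2 * (1/3::real)^Suc k)"
    by (rule suminf_le[OF _ s sums_summable[OF g]]) (use assms in \<open>auto intro: mult_left_mono\<close>)
  thus "(\<Sum>k. (1/3)^Suc k * a k) \<le> 1" using sums_unique[OF g] by simp
  have "(\<Sum>k. (1/3)^Suc (Suc k) * a (Suc k)) = (\<Sum>k. (1/3)^Suc k * a k) - (1/3) * a 0"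
    using suminf_split_head[OF s] by simp
  moreover have "(\<Sum>k. (1/3)^Suc (Suc k) * a (Suc k)) = (1/3) * (\<Sum>k. (1/3)^Suc k * a (Suc k))"
  proof -
    have s2: "summable (\<lambda>k. (1/3)^Suc k * a (Suc k))"
      using summable_ignore_initial_segment[OF s, of 1] by (simp add: mult.assoc)
    show ?thesis using suminf_mult[OF s2, of "1/3"] by (simp add: mult.assoc)
  qed
  ultimately show "(\<Sum>k. (1/3)^Suc k * a k) = (1/3) * (a 0 + (\<Sum>k. (1/3)^Suc k * a (Suc k)))"
    by (simp add: algebra_simps)
qed

lemma zero_vec:
  fixes G :: "'x \<Rightarrow> real \<times> real"
  assumes cl: "\<forall>x\<in>Z. nxt x \<in> Z" and bd: "\<forall>x\<in>Z. \<bar>fst (G x)\<bar> \<le> B \<and> \<bar>snd (G x)\<bar> \<le> B"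
    and eq: "\<forall>x\<in>Z. G x = (1/3) *\<^sub>R G (nxt x)"
  shows "\<forall>x\<in>Z. G x = 0"
proof -
  have 1: "\<forall>x\<in>Z. fst (G x) = 0"
    by (rule zero_lemma[where nxt=nxt and B=B]) (use cl bd eq in \<open>auto\<close>)
  have 2: "\<forall>x\<in>Z. snd (G x) = 0"
    by (rule zero_lemma[where nxt=nxt and B=B]) (use cl bd eq in \<open>auto\<close>)
  show ?thesis using 1 2 by (simp add: prod_eq_iff)
qed

lemma U0_diff: "u \<in> U0 \<Longrightarrow> v \<in> U0 \<Longrightarrow> \<bar>fst (u - v)\<bar> \<le> 1 \<and> \<bar>snd (u - v)\<bar> \<le> 1"
  unfolding U0_def by (cases u; cases v) auto

theorem mainTheorem7:
  fixes X :: "'x set" and S :: "real \<times> real \<Rightarrow> 'x"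
    and e :: "'x \<Rightarrow> ((int \<times> int) \<times> 'x) set"
  assumes "is_square_set X S"
    and "sq_mor X S (tens_set X S) (tens_S X S) e"
  shows "is_square_set U0 S_U0
    \<and> sq_mor (tens_set U0 S_U0) (tens_S U0 S_U0) U0 S_U0 alphaN
    \<and> (\<exists>!h. h \<in> extensional X \<and> sq_mor X S U0 S_U0 h
             \<and> (\<forall>x\<in>X. h x = alphaN (tens_map X S U0 S_U0 h (e x))))"
proof -
  from assms(1) have SX: "S \<in> M0 \<rightarrow> X" and inj: "inj_on S M0" unfolding is_square_set_def by auto
  from assms(2) have eX: "\<forall>x\<in>X. e x \<in> tens_set X S" and eS: "\<forall>p\<in>M0. e (S p) = tens_S X S p"
    unfolding sq_mor_def by auto
  define rep where "rep x = (SOME nx. nx \<in> e x)" for x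
  define lab where "lab x = fst (rep x)" for x
  define nxt where "nxt x = snd (rep x)" for x
  have rep_in: "rep x \<in> e x \<and> lab x \<in> Nidx \<and> nxt x \<in> X" if xX: "x\<in>X" for x
  proof -
    have "e x \<in> (Nidx \<times> X) // tens_rel X S" using eX xX unfolding tens_set_def by blast
    then obtain a where a: "a \<in> Nidx \<times> X" "e x = tens_rel X S `` {a}"
       unfolding tens_set_def by (auto elim: quotientE)
    have "a \<in> e x" using a unfolding tens_rel_def by auto
    hence r: "rep x \<in> e x" unfolding rep_def by (rule someI)
    hence "(a, rep x) \<in> tens_rel X S" using a by simp
    from rel_closed[OF this a(1)] r show ?thesis unfolding lab_def nxt_def by (cases "rep x") auto
  qed
  have tm: "alphaN (tens_map X S U0 S_U0 h (e x)) = (1/3) *\<^sub>R (ptN (lab x) + h (nxt x))" for h x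
    unfolding tens_map_def Let_def lab_def nxt_def rep_def by (simp add: alphaN_el)
  have bdry: "\<exists>q\<in>M0. nxt (S p) = S q \<and> (1/3) *\<^sub>R (ptN (lab (S p)) + q) = p" if "p\<in>M0" for p
  proof -
    define n where "n = (SOME n. n \<in> Nidx \<and> p \<in> sub_sq n)"
    have n: "n \<in> Nidx \<and> p \<in> sub_sq n" unfolding n_def by (rule someI_ex) (rule sub_sq_ex[OF that])
    have e1: "e (S p) = tens_el X S n (S (3 *\<^sub>R p - ptN n))"
      using eS that unfolding tens_S_def Let_def n_def by simp
    have "rep (S p) \<in> e (S p)" using rep_in SX that by auto
    hence r: "((n, S (3 *\<^sub>R p - ptN n)), rep (S p)) \<in> tens_rel X S" using e1 unfolding tens_el_def by simp
    have "\<exists>q\<in>M0. snd (n, S (3 *\<^sub>R p - ptN n)) = S q \<and>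
        (1/3) *\<^sub>R (ptN (fst (n, S (3 *\<^sub>R p - ptN n))) + q) = p"
      using sub_sq_M0[OF that n[THEN conjunct1] n[THEN conjunct2]]
      by (intro bexI[of _ "3 *\<^sub>R p - ptN n"]) (auto simp: algebra_simps)
    from rel_bd[OF inj r this] show ?thesis unfolding lab_def nxt_def by simp
  qed
  have lab_U0: "(1/3) *\<^sub>R (ptN n + z) \<in> U0" if "n \<in> Nidx" "z \<in> U0" for n z
    using that unfolding Nidx_def U0_def ptN_def by (cases z) auto
  have bd_from_eq: "\<forall>p\<in>M0. h (S p) = p"
    if hU: "\<forall>x\<in>X. h x \<in> U0" and heq: "\<forall>x\<in>X. h x = (1/3) *\<^sub>R (ptN (lab x) + h (nxt x))" for h
  proof -
    let ?Z = "S ` M0"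
    let ?G = "\<lambda>x. h x - inv_into M0 S x"
    have cl: "\<forall>x\<in>?Z. nxt x \<in> ?Z" using bdry by blast
    have bd: "\<forall>x\<in>?Z. \<bar>fst (?G x)\<bar> \<le> 1 \<and> \<bar>snd (?G x)\<bar> \<le> 1"
    proof
      fix x assume "x \<in> ?Z"
      then obtain p where p: "p \<in> M0" "x = S p" by blast
      have "p \<in> U0" using p unfolding M0_def U0_def by auto
      moreover have "h x \<in> U0" using hU SX p by auto
      ultimately show "\<bar>fst (?G x)\<bar> \<le> 1 \<and> \<bar>snd (?G x)\<bar> \<le> 1"
        using U0_diff p inv_into_f_f[OF inj p(1)] by simp
    qed
    have eq: "\<forall>x\<in>?Z. ?G x = (1/3) *\<^sub>R ?G (nxt x)"
    proof
      fix x assume "x \<in> ?Z"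
      then obtain p where p: "p \<in> M0" "x = S p" by blast
      obtain q where q: "q \<in> M0" "nxt (S p) = S q" "(1/3) *\<^sub>R (ptN (lab (S p)) + q) = p"
        using bdry[OF p(1)] by blast
      have "h x = (1/3) *\<^sub>R (ptN (lab x) + h (nxt x))" using heq SX p by auto
      thus "?G x = (1/3) *\<^sub>R ?G (nxt x)"
        using p q inv_into_f_f[OF inj p(1)] inv_into_f_f[OF inj q(1)]
        by (auto simp: algebra_simps)
    qed
    have "\<forall>x\<in>?Z. ?G x = 0" by (rule zero_vec[OF cl bd eq])
    thus ?thesis using inv_into_f_f[OF inj] by auto
  qed
  define Q where "Q h \<longleftrightarrow> h \<in> extensional X \<and> sq_mor X S U0 S_U0 h
             \<and> (\<forall>x\<in>X. h x = alphaN (tens_map X S U0 S_U0 h (e x)))" for h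
  have uniq: "h1 = h2" if "Q h1" "Q h2" for h1 h2
  proof -
    have h: "h1 \<in> extensional X" "h2 \<in> extensional X" "\<forall>x\<in>X. h1 x \<in> U0" "\<forall>x\<in>X. h2 x \<in> U0"
      "\<forall>x\<in>X. h1 x = (1/3) *\<^sub>R (ptN (lab x) + h1 (nxt x))"
      "\<forall>x\<in>X. h2 x = (1/3) *\<^sub>R (ptN (lab x) + h2 (nxt x))"
      using that unfolding Q_def sq_mor_def tm Pi_def by blast+
    have "\<forall>x\<in>X. h1 x - h2 x = 0"
    proof (rule zero_vec[where nxt=nxt and B=1])
      show "\<forall>x\<in>X. nxt x \<in> X" using rep_in by blast
      show "\<forall>x\<in>X. \<bar>fst (h1 x - h2 x)\<bar> \<le> 1 \<and> \<bar>snd (h1 x - h2 x)\<bar> \<le> 1"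
        using h U0_diff by blast
      show "\<forall>x\<in>X. h1 x - h2 x = (1/3) *\<^sub>R (h1 (nxt x) - h2 (nxt x))"
      proof
        fix x assume "x \<in> X"
        hence "h1 x = (1/3) *\<^sub>R (ptN (lab x) + h1 (nxt x))" "h2 x = (1/3) *\<^sub>R (ptN (lab x) + h2 (nxt x))"
          using h by auto
        thus "h1 x - h2 x = (1/3) *\<^sub>R (h1 (nxt x) - h2 (nxt x))" by (simp add: algebra_simps)
      qed
    qed
    thus ?thesis using h(1,2) by (intro extensionalityI[of h1 X h2]) auto
  qed
  define A1 where "A1 x k = real_of_int (fst (lab ((nxt ^^ k) x)))" for x k
  define A2 where "A2 x k = real_of_int (snd (lab ((nxt ^^ k) x)))" for x k
  define H where "H x = (if x \<in> X then ((\<Sum>k. (1/3)^Suc k * A1 x k), (\<Sum>k. (1/3)^Suc k * A2 x k))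
        else undefined)" for x
  have trajX: "(nxt ^^ k) x \<in> X" if "x \<in> X" for x k
    using that by (induction k) (auto simp: rep_in)
  have Abd: "0 \<le> A1 x k \<and> A1 x k \<le> 2 \<and> 0 \<le> A2 x k \<and> A2 x k \<le> 2" if "x \<in> X" for x k
    using rep_in[OF trajX[OF that, of k]] unfolding A1_def A2_def Nidx_def by auto
  have Asuc: "A1 x (Suc k) = A1 (nxt x) k" "A2 x (Suc k) = A2 (nxt x) k" for x k
    unfolding A1_def A2_def by (simp_all only: funpow_Suc_right o_apply)
  have A0: "A1 x 0 = real_of_int (fst (lab x))" "A2 x 0 = real_of_int (snd (lab x))" for x
    unfolding A1_def A2_def by simp_all
  have HU: "\<forall>x\<in>X. H x \<in> U0"
  proof
    fix x assume x: "x \<in> X"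
    have "0 \<le> A1 x k" "A1 x k \<le> 2" "0 \<le> A2 x k" "A2 x k \<le> 2" for k using Abd[OF x] by auto
    note s1 = series_facts[of "A1 x", OF this(1,2)] and s2 = series_facts[of "A2 x", OF this(3,4)]
    show "H x \<in> U0" unfolding H_def U0_def using x s1 s2 by auto
  qed
  have Heq: "\<forall>x\<in>X. H x = (1/3) *\<^sub>R (ptN (lab x) + H (nxt x))"
  proof
    fix x assume x: "x \<in> X"
    have nx: "nxt x \<in> X" using rep_in x by blast
    have "0 \<le> A1 x k" "A1 x k \<le> 2" "0 \<le> A2 x k" "A2 x k \<le> 2" for k using Abd[OF x] by auto
    note s1 = series_facts(4)[of "A1 x", OF this(1,2)] and s2 = series_facts(4)[of "A2 x", OF this(3,4)]
    show "H x = (1/3) *\<^sub>R (ptN (lab x) + H (nxt x))"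
      unfolding H_def using x nx s1 s2 by (simp add: Asuc A0 ptN_def)
  qed
  have QH: "Q H"
    unfolding Q_def sq_mor_def tm
    using HU Heq bd_from_eq[OF HU Heq] SX unfolding H_def[abs_def] extensional_def S_U0_def
    by auto
  have P1: "is_square_set U0 S_U0"
    unfolding is_square_set_def U0_def S_U0_def M0_def by (auto simp: inj_on_def)
  have P2: "sq_mor (tens_set U0 S_U0) (tens_S U0 S_U0) U0 S_U0 alphaN"
    unfolding sq_mor_def
  proof
    show "alphaN \<in> tens_set U0 S_U0 \<rightarrow> U0"
    proof
      fix c assume "c \<in> tens_set U0 S_U0"
      then obtain a where a: "a \<in> Nidx \<times> U0" "c = tens_rel U0 S_U0 `` {a}"
        unfolding tens_set_def by (auto elim: quotientE)
      have "c = tens_el U0 S_U0 (fst a) (snd a)" using a unfolding tens_el_def by simp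
      thus "alphaN c \<in> U0" using a lab_U0 by (auto simp: alphaN_el)
    qed
    show "\<forall>p\<in>M0. alphaN (tens_S U0 S_U0 p) = S_U0 p"
      unfolding tens_S_def Let_def alphaN_el by (simp add: S_U0_def algebra_simps)
  qed
  show ?thesis using P1 P2 QH uniq unfolding Q_def by blast
qed

end
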